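(* Let $m\ge 2$ be an integer. If $m$ is not a power of $2$, then the $m$-element subsets of a $2m$-element set $X$ can be coloured Red and Blue so that (i) complementary $m$-sets (i.e. $A$ and $X\setminus A$) receive distinct colours, and (ii) every point of $X$ is contained in the same number of Red sets as Blue sets. If $m$ is a power of $2$, then there is a Red–Blue colouring of the $m$-subsets of $X$ satisfying (i) such that for $m/2$ of the points of $X$, the number of Red sets containing the point exceeds the number of Blue sets containing it by $3$, and for the remaining $3m/2$ points, the number of Blue sets containing the point exceeds the number of Red sets containing it by $1$. *)

theory Defs
  imports Main
begin

definition msubsets :: "'a set \<Rightarrow> nat \<Rightarrow> 'a set set" where
  "msubsets X m = {A. A \<subseteq> X \<and> card A = m}"

definition red_deg :: "('a set \<Rightarrow> bool) \<Rightarrow> 'a set \<Rightarrow> nat \<Rightarrow> 'a \<Rightarrow> nat" where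
  "red_deg red X m x = card {A \<in> msubsets X m. red A \<and> x \<in> A}"

definition blue_deg :: "('a set \<Rightarrow> bool) \<Rightarrow> 'a set \<Rightarrow> nat \<Rightarrow> 'a \<Rightarrow> nat" where
  "blue_deg red X m x = card {A \<in> msubsets X m. \<not> red A \<and> x \<in> A}"

definition complement_distinct :: "('a set \<Rightarrow> bool) \<Rightarrow> 'a set \<Rightarrow> nat \<Rightarrow> bool" where
  "complement_distinct red X m = (\<forall>A \<in> msubsets X m. red A \<noteq> red (X - A))"

end

theory Submission
  imports Defs
begin


lemma m2a: "(X::nat) = P + Q \<Longrightarrow> P mod 2 = R mod 2 \<Longrightarrow> Q mod 2 = 0 \<Longrightarrow> X mod 2 = R mod 2"
proof -
  assume a: "X = P + Q" "P mod 2 = R mod 2" "Q mod 2 = 0"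
  have "X mod 2 = (P mod 2 + Q mod 2) mod 2" unfolding a(1) by (rule mod_add_eq[symmetric])
  then show ?thesis using a(2,3) by simp
qed
lemma m2b: "(X::nat) = P + Q \<Longrightarrow> P mod 2 = R mod 2 \<Longrightarrow> Q mod 2 = S mod 2 \<Longrightarrow> X mod 2 = (R + S) mod 2"
proof -
  assume a: "X = P + Q" "P mod 2 = R mod 2" "Q mod 2 = S mod 2"
  have "X mod 2 = (P mod 2 + Q mod 2) mod 2" unfolding a(1) by (rule mod_add_eq[symmetric])
  also have "\<dots> = (R mod 2 + S mod 2) mod 2" using a(2,3) by simp
  also have "\<dots> = (R + S) mod 2" by (rule mod_add_eq)
  finally show ?thesis .
qed
lemma m2c: "(X::nat) = P + Q \<Longrightarrow> Q = U + V \<Longrightarrow> P = W + U \<Longrightarrow> W mod 2 = 0 \<Longrightarrow> V mod 2 = 0 \<Longrightarrow> X mod 2 = 0"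
proof -
  assume a: "X = P + Q" "Q = U + V" "P = W + U" "W mod 2 = 0" "V mod 2 = 0"
  have "X = (W + V) + 2*U" using a(1-3) by simp
  moreover have "(W + V) mod 2 = (W mod 2 + V mod 2) mod 2" by (rule mod_add_eq[symmetric])
  then have "even (W + V)" using a(4,5) by (simp add: even_iff_mod_2_eq_zero)
  ultimately show ?thesis by (simp add: even_iff_mod_2_eq_zero[symmetric])
qed

lemma luc: "((2*a) choose (2*b)) mod 2 = (a choose b) mod 2 \<and> ((2*a) choose (2*b+1)) mod 2 = 0"
proof (induction a arbitrary: b)
  case 0
  then show ?case by (cases b) auto
next
  case (Suc a)
  have A: "((2*a+1) choose (2*c+1)) mod 2 = (a choose c) mod 2" for c
  proof -
    have "(2*a+1) choose (2*c+1) = (2*a choose 2*c) + (2*a choose (2*c+1))"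
      using binomial_Suc_Suc[of "2*a" "2*c"] by simp
    note eq = this
    show ?thesis by (rule m2a[where R="a choose c", OF eq]) (use Suc.IH[of c] in simp)+
  qed
  have B: "((2*a+1) choose (2*c+2)) mod 2 = (a choose (c+1)) mod 2" for c
  proof -
    have "(2*a+1) choose (2*c+2) = (2*a choose (2*(c+1))) + (2*a choose (2*c+1))"
      using binomial_Suc_Suc[of "2*a" "2*c+1"] by simp
    note eq = this
    show ?thesis by (rule m2a[where R="a choose (c+1)", OF eq]) (use Suc.IH[of c] Suc.IH[of "c+1"] in simp)+
  qed
  show ?case
  proof (cases b)
    case 0
    have "2 * Suc a choose 1 = 2 * Suc a" by simp
    then show ?thesis using 0 by simp
  next
    case (Suc c)
    have e1: "2 * Suc a choose (2*b) = ((2*a+1) choose (2*c+1)) + ((2*a+1) choose (2*c+2))"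
      using binomial_Suc_Suc[of "2*a+1" "2*c+1"] Suc by simp
    have e2: "2 * Suc a choose (2*b+1) = ((2*a+1) choose (2*c+2)) + ((2*a+1) choose (2*c+3))"
      using binomial_Suc_Suc[of "2*a+1" "2*c+2"] Suc by (simp add: numeral_3_eq_3)
    have e3: "(2*a+1) choose (2*c+3) = (2*a choose (2*c+2)) + (2*a choose (2*c+3))"
      using binomial_Suc_Suc[of "2*a" "2*c+2"] by (simp add: numeral_3_eq_3)
    have e4: "(2*a+1) choose (2*c+2) = (2*a choose (2*c+1)) + (2*a choose (2*c+2))"
      using binomial_Suc_Suc[of "2*a" "2*c+1"] by simp
    have i1: "(2*a choose (2*c+1)) mod 2 = 0" using Suc.IH[of c] by simp
    have i2: "(2*a choose (2*(c+1)+1)) mod 2 = 0" using Suc.IH[of "c+1"] by blast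
    have "2*(c+1)+1 = 2*c+3" by simp
    then have i2': "(2*a choose (2*c+3)) mod 2 = 0" using i2 by metis
    have p1: "(2 * Suc a choose (2*b)) mod 2 = ((a choose c) + (a choose (c+1))) mod 2"
      using m2b[OF e1 A[of c] B[of c]] .
    have p2: "(2 * Suc a choose (2*b+1)) mod 2 = 0"
      using m2c[OF e2 e3 e4 i1 i2'] .
    have "Suc a choose Suc c = (a choose c) + (a choose (c+1))" by simp
    then show ?thesis using p1 p2 Suc by simp
  qed
qed

lemma pow2_double: "(\<exists>k. 2*a = (2::nat)^k) \<longleftrightarrow> (\<exists>k. a = (2::nat)^k)"
proof
  assume "\<exists>k. 2*a = (2::nat)^k"
  then obtain k where k: "2*a = (2::nat)^k" by blast
  then show "\<exists>k. a = (2::nat)^k"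
    by (cases k) auto
next
  assume "\<exists>k. a = (2::nat)^k"
  then obtain k where "a = (2::nat)^k" by blast
  then have "2*a = 2^Suc k" by simp
  then show "\<exists>k. 2*a = (2::nat)^k" by blast
qed

lemma odd_not_pow2: "m \<ge> 3 \<Longrightarrow> odd m \<Longrightarrow> \<not> (\<exists>k. m = (2::nat)^k)"
proof
  assume "m \<ge> 3" "odd m" "\<exists>k. m = (2::nat)^k"
  then obtain k where k: "m = 2^k" by blast
  show False
  proof (cases k)
    case 0 then show ?thesis using k \<open>m\<ge>3\<close> by simp
  next
    case (Suc j) then show ?thesis using k \<open>odd m\<close> by simp
  qed
qed

lemma central_odd: "m \<ge> 1 \<Longrightarrow> odd ((2*m-1) choose (m-1)) \<longleftrightarrow> (\<exists>k. m = (2::nat)^k)"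
proof (induction m rule: less_induct)
  case (less m)
  show ?case
  proof (cases "m = 1")
    case True
    then show ?thesis by (auto intro: exI[of _ 0])
  next
    case False
    show ?thesis
    proof (cases "even m")
      case True
      then obtain a where a: "m = 2*a" by blast
      with False less.prems have a1: "a \<ge> 1" "a < m" by auto
      have s1: "2*m-1 = Suc (2*(2*a-1))" "m-1 = Suc (2*(a-1))" using a a1 by auto
      have eq: "(2*m-1) choose (m-1) = (2*(2*a-1) choose (2*(a-1))) + (2*(2*a-1) choose (2*(a-1)+1))"
        unfolding s1 using binomial_Suc_Suc[of "2*(2*a-1)" "2*(a-1)"] by (simp only: Suc_eq_plus1)
      have "((2*m-1) choose (m-1)) mod 2 = ((2*a-1) choose (a-1)) mod 2"
        by (rule m2a[where R="(2*a-1) choose (a-1)", OF eq]) (use luc[of "2*a-1" "a-1"] in simp)+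
      then have "odd ((2*m-1) choose (m-1)) \<longleftrightarrow> odd ((2*a-1) choose (a-1))"
        by (simp add: odd_iff_mod_2_eq_one)
      also have "\<dots> \<longleftrightarrow> (\<exists>k. a = (2::nat)^k)" using less.IH[of a] a1 by simp
      also have "\<dots> \<longleftrightarrow> (\<exists>k. m = (2::nat)^k)" using pow2_double a by simp
      finally show ?thesis .
    next
      case odd: False
      then obtain a where a: "m = 2*a+1" using oddE by blast
      with False less.prems have a1: "a \<ge> 1" by auto
      have s1: "2*m-1 = Suc (2*(2*a))" "m-1 = Suc (2*(a-1)+1)" using a a1 by auto
      have s2: "Suc (2*(a-1)+1) = 2*a" using a1 by simp
      have eq: "(2*m-1) choose (m-1) = (2*(2*a) choose (2*a)) + (2*(2*a) choose (2*(a-1)+1))"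
        unfolding s1 using binomial_Suc_Suc[of "2*(2*a)" "2*(a-1)+1"] unfolding s2 by simp
      have "((2*m-1) choose (m-1)) mod 2 = ((2*a) choose a) mod 2"
        by (rule m2a[where R="(2*a) choose a", OF eq]) (use luc[of "2*a" "a"] luc[of "2*a" "a-1"] in simp)+
      moreover have "(2*a) choose a = 2 * ((2*a-1) choose (a-1))"
      proof -
        have "(2*a) choose a = ((2*a-1) choose (a-1)) + ((2*a-1) choose a)"
          using a1 binomial_Suc_Suc[of "2*a-1" "a-1"] by simp
        moreover have "(2*a-1) choose a = (2*a-1) choose (a-1)"
          using a1 binomial_symmetric[of a "2*a-1"] by simp
        ultimately show ?thesis by simp
      qed
      ultimately have "even ((2*m-1) choose (m-1))" by (simp add: even_iff_mod_2_eq_zero)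
      moreover have "\<not> (\<exists>k. m = (2::nat)^k)" using odd_not_pow2[of m] a a1 by auto
      ultimately show ?thesis by simp
    qed
  qed
qed



lemma cnt_int: "finite S \<Longrightarrow> int (card {C\<in>S. P C}) = (\<Sum>C\<in>S. if P C then 1 else 0)"
proof -
  assume f: "finite S"
  have "int (card {C\<in>S. P C}) = (\<Sum>C\<in>{C\<in>S. P C}. (1::int))" by simp
  also have "\<dots> = (\<Sum>C\<in>S. if P C then 1 else 0)" using f by (rule sum.inter_filter)
  finally show ?thesis .
qed

lemma card_union2: "finite S \<Longrightarrow> A = B \<union> C \<Longrightarrow> B \<subseteq> S \<Longrightarrow> C \<subseteq> S \<Longrightarrow> B \<inter> C = {} \<Longrightarrow> card A = card B + card C"
  by (metis card_Un_disjoint finite_subset)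

lemma ev2: "even (d::int) \<Longrightarrow> 0 < d \<Longrightarrow> 2 \<le> d"
  by (auto elim!: evenE)

context
  fixes X :: "'a set" and m :: nat
  assumes fin: "finite X" and cX: "card X = 2*m" and m2: "m \<ge> 2"
begin

lemma finM: "finite (msubsets X m)"
  by (rule finite_subset[of _ "Pow X"]) (auto simp: msubsets_def fin)

lemma compM: assumes "A \<in> msubsets X m" shows "X - A \<in> msubsets X m"
proof -
  have "A \<subseteq> X" "card A = m" using assms by (auto simp: msubsets_def)
  moreover have "finite A" using \<open>A \<subseteq> X\<close> fin finite_subset by blast
  ultimately have "card (X - A) = m" using cX by (simp add: card_Diff_subset)
  then show ?thesis by (auto simp: msubsets_def)
qed

lemma dd: "A \<in> msubsets X m \<Longrightarrow> X - (X - A) = A" by (auto simp: msubsets_def)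

lemma card_compl:
  assumes "S \<subseteq> msubsets X m" "\<And>A. A \<in> S \<Longrightarrow> X - A \<in> T" "T \<subseteq> msubsets X m" "\<And>B. B \<in> T \<Longrightarrow> X - B \<in> S"
  shows "card S = card T"
proof -
  have "bij_betw (\<lambda>A. X - A) S T"
  proof (rule bij_betw_byWitness[where f'="\<lambda>A. X - A"])
    show "\<forall>a\<in>S. X - (X - a) = a" using assms(1) dd by blast
    show "\<forall>a\<in>T. X - (X - a) = a" using assms(3) dd by blast
  qed (use assms in auto)
  then show ?thesis by (rule bij_betw_same_card)
qed

lemma blue_eq:
  assumes cd: "complement_distinct red X m" and x: "x \<in> X"
  shows "blue_deg red X m x = card {A \<in> msubsets X m. red A \<and> x \<notin> A}"
  unfolding blue_deg_def
  by (rule card_compl) (use cd x compM in \<open>auto simp: complement_distinct_def\<close>)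

lemma NR_split:
  "card {A \<in> msubsets X m. red A} = red_deg red X m x + card {A \<in> msubsets X m. red A \<and> x \<notin> A}"
  unfolding red_deg_def by (rule card_union2[OF finM]) auto

lemma cardM: "card (msubsets X m) = 2 * ((2*m-1) choose (m-1))"
proof -
  have "card (msubsets X m) = (2*m) choose m"
    unfolding msubsets_def using n_subsets[OF fin, of m] cX by simp
  also have "(2*m) choose m = ((2*m-1) choose (m-1)) + ((2*m-1) choose m)"
    using binomial_Suc_Suc[of "2*m-1" "m-1"] m2 by (simp add: Suc_diff_le)
  also have "(2*m-1) choose m = (2*m-1) choose (m-1)"
    using binomial_symmetric[of m "2*m-1"] m2 by (simp add: diff_le_mono)
  finally show ?thesis by simp
qed

lemma N_val:
  assumes cd: "complement_distinct red X m"
  shows "card {A \<in> msubsets X m. red A} = (2*m-1) choose (m-1)"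
proof -
  have "card (msubsets X m) = card {A \<in> msubsets X m. red A} + card {A \<in> msubsets X m. \<not> red A}"
    by (rule card_union2[OF finM]) auto
  moreover have "card {A \<in> msubsets X m. \<not> red A} = card {A \<in> msubsets X m. red A}"
    by (rule card_compl) (use cd compM in \<open>auto simp: complement_distinct_def\<close>)
  ultimately show ?thesis using cardM by simp
qed

lemma sum_r: "(\<Sum>x\<in>X. red_deg red X m x) = m * card {A \<in> msubsets X m. red A}"
proof -
  let ?R = "{A \<in> msubsets X m. red A}"
  have fR: "finite ?R" using finM by simp
  have "(\<Sum>x\<in>X. red_deg red X m x) = (\<Sum>x\<in>X. \<Sum>A\<in>?R. if x \<in> A then 1 else 0)"
  proof (rule sum.cong[OF refl])
    fix x
    have "{A \<in> msubsets X m. red A \<and> x \<in> A} = {A \<in> ?R. x \<in> A}" by auto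
    then have "red_deg red X m x = (\<Sum>A\<in>{A \<in> ?R. x \<in> A}. 1)" unfolding red_deg_def by simp
    also have "\<dots> = (\<Sum>A\<in>?R. if x \<in> A then 1 else 0)" by (rule sum.inter_filter[OF fR])
    finally show "red_deg red X m x = (\<Sum>A\<in>?R. if x \<in> A then 1 else 0)" .
  qed
  also have "\<dots> = (\<Sum>A\<in>?R. \<Sum>x\<in>X. if x \<in> A then 1 else 0)" by (rule sum.swap)
  also have "\<dots> = (\<Sum>A\<in>?R. m)"
  proof (rule sum.cong[OF refl])
    fix A assume "A \<in> ?R"
    then have A: "A \<subseteq> X" "card A = m" by (auto simp: msubsets_def)
    have "(\<Sum>x\<in>X. if x \<in> A then 1 else 0) = (\<Sum>x\<in>{x \<in> X. x \<in> A}. (1::nat))"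
      by (rule sum.inter_filter[OF fin, symmetric])
    also have "{x \<in> X. x \<in> A} = A" using A by auto
    finally show "(\<Sum>x\<in>X. if x \<in> A then 1 else 0) = m" using A by simp
  qed
  finally show ?thesis by simp
qed

lemma Keven:
  assumes x: "x \<in> X" and y: "y \<in> X" and xy: "x \<noteq> y"
  shows "even (card {A \<in> msubsets X m. x \<in> A \<and> y \<notin> A})"
proof -
  let ?K = "{A \<in> msubsets X m. x \<in> A \<and> y \<notin> A}"
  let ?L = "{S. S \<subseteq> X - {x, y} \<and> card S = m - 1}"
  have "bij_betw (\<lambda>A. A - {x}) ?K ?L"
  proof (rule bij_betw_byWitness[where f'="\<lambda>S. insert x S"])
    show "\<forall>a\<in>?K. insert x (a - {x}) = a" by auto
    show "\<forall>a\<in>?L. insert x a - {x} = a" using xy by auto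
    show "(\<lambda>A. A - {x}) ` ?K \<subseteq> ?L"
    proof
      fix S assume "S \<in> (\<lambda>A. A - {x}) ` ?K"
      then obtain A where A: "A \<in> ?K" "S = A - {x}" by blast
      then have "A \<subseteq> X" "card A = m" "x \<in> A" "y \<notin> A" by (auto simp: msubsets_def)
      moreover have "finite A" using \<open>A \<subseteq> X\<close> fin finite_subset by blast
      ultimately show "S \<in> ?L" using A(2) by auto
    qed
    show "insert x ` ?L \<subseteq> ?K"
    proof
      fix A assume "A \<in> insert x ` ?L"
      then obtain S where S: "S \<subseteq> X - {x, y}" "card S = m - 1" "A = insert x S" by blast
      moreover have "finite S" using S(1) fin finite_subset by blast
      moreover have "x \<notin> S" using S(1) by auto
      ultimately have "card A = m" using m2 by simp
      then show "A \<in> ?K" using S x xy by (auto simp: msubsets_def)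
    qed
  qed
  then have "card ?K = card ?L" by (rule bij_betw_same_card)
  also have "\<dots> = (2*m-2) choose (m-1)"
  proof -
    have "card (X - {x, y}) = 2*m - 2" using x y xy fin cX by (simp add: card_Diff_subset)
    then show ?thesis using n_subsets[of "X - {x,y}" "m-1"] fin by simp
  qed
  also have "\<dots> = 2 * ((2*m-3) choose (m-1))"
  proof -
    have s: "2*m-2 = Suc (2*m-3)" "m-1 = Suc (m-2)" using m2 by auto
    have "(2*m-2) choose (m-1) = ((2*m-3) choose (m-2)) + ((2*m-3) choose (m-1))"
      unfolding s using binomial_Suc_Suc[of "2*m-3" "m-2"] s(2) by simp
    moreover have "(2*m-3) choose (m-2) = (2*m-3) choose (m-1)"
    proof -
      have "(2*m-3) choose (m-2) = (2*m-3) choose ((2*m-3) - (m-2))"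
        by (rule binomial_symmetric) (use m2 in simp)
      moreover have "(2*m-3) - (m-2) = m-1" using m2 by simp
      ultimately show ?thesis by simp
    qed
    ultimately show ?thesis by simp
  qed
  finally show ?thesis by simp
qed

lemma pair_even:
  assumes cd: "complement_distinct red X m" and x: "x \<in> X" and y: "y \<in> X" and xy: "x \<noteq> y"
  shows "even (int (red_deg red X m x) - int (red_deg red X m y))"
proof -
  let ?S0 = "{A \<in> msubsets X m. red A \<and> x \<in> A \<and> y \<in> A}"
  let ?S1 = "{A \<in> msubsets X m. red A \<and> x \<in> A \<and> y \<notin> A}"
  let ?S2 = "{A \<in> msubsets X m. red A \<and> y \<in> A \<and> x \<notin> A}"
  let ?T1 = "{A \<in> msubsets X m. \<not> red A \<and> x \<in> A \<and> y \<notin> A}"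
  let ?K = "{A \<in> msubsets X m. x \<in> A \<and> y \<notin> A}"
  have rx: "red_deg red X m x = card ?S0 + card ?S1"
    unfolding red_deg_def by (rule card_union2[OF finM]) auto
  have ry: "red_deg red X m y = card ?S0 + card ?S2"
    unfolding red_deg_def by (rule card_union2[OF finM]) auto
  have s2: "card ?S2 = card ?T1"
    by (rule card_compl) (use cd compM x y in \<open>auto simp: complement_distinct_def\<close>)
  have k: "card ?K = card ?S1 + card ?T1"
    by (rule card_union2[OF finM]) auto
  obtain q where q: "card ?K = 2 * q" using Keven[OF x y xy] by blast
  have "int (red_deg red X m x) - int (red_deg red X m y) = 2 * (int (card ?S1) - int q)"
    using rx ry s2 k q by simp
  then show ?thesis by simp
qed

lemma flip_deg:
  assumes F: "F \<subseteq> msubsets X m"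
  shows "int (red_deg (\<lambda>C. if C \<in> F then \<not> red C else red C) X m z) =
    int (red_deg red X m z) + (\<Sum>C\<in>F. if z \<in> C then (if red C then -1 else 1) else 0)"
proof -
  let ?r' = "\<lambda>C. if C \<in> F then \<not> red C else red C"
  let ?f = "\<lambda>C. if red C \<and> z \<in> C then 1 else (0::int)"
  let ?g = "\<lambda>C. if ?r' C \<and> z \<in> C then 1 else (0::int)"
  have a: "int (red_deg ?r' X m z) = (\<Sum>C\<in>msubsets X m. ?g C)"
    unfolding red_deg_def by (rule cnt_int[OF finM])
  have b: "int (red_deg red X m z) = (\<Sum>C\<in>msubsets X m. ?f C)"
    unfolding red_deg_def by (rule cnt_int[OF finM])
  have "(\<Sum>C\<in>msubsets X m. ?g C) - (\<Sum>C\<in>msubsets X m. ?f C) = (\<Sum>C\<in>msubsets X m. ?g C - ?f C)"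
    by (simp add: sum_subtractf)
  also have "\<dots> = (\<Sum>C\<in>F. ?g C - ?f C)"
    by (rule sum.mono_neutral_right[OF finM F]) auto
  also have "\<dots> = (\<Sum>C\<in>F. if z \<in> C then (if red C then -1 else 1) else 0)"
    by (rule sum.cong) auto
  finally show ?thesis using a b by linarith
qed

lemma flip_valid:
  assumes cd: "complement_distinct red X m" and F: "F \<subseteq> msubsets X m"
    and cl: "\<And>C. C \<in> F \<Longrightarrow> X - C \<in> F"
  shows "complement_distinct (\<lambda>C. if C \<in> F then \<not> red C else red C) X m"
  unfolding complement_distinct_def
proof
  fix A assume A: "A \<in> msubsets X m"
  have "A \<in> F \<longleftrightarrow> X - A \<in> F" using cl dd[OF A] by metis
  then show "(if A \<in> F then \<not> red A else red A) \<noteq> (if X - A \<in> F then \<not> red (X - A) else red (X - A))"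
    using cd A by (auto simp: complement_distinct_def)
qed


lemma swapM:
  assumes A: "A \<in> msubsets X m" and "x \<in> A" "y \<notin> A" "y \<in> X"
  shows "insert y (A - {x}) \<in> msubsets X m"
proof -
  have "A \<subseteq> X" "card A = m" using A by (auto simp: msubsets_def)
  moreover have "finite A" using \<open>A \<subseteq> X\<close> fin finite_subset by blast
  ultimately have "card (insert y (A - {x})) = m" using assms m2 by simp
  then show ?thesis using assms \<open>A \<subseteq> X\<close> by (auto simp: msubsets_def)
qed

lemma move:
  assumes cd: "complement_distinct red X m" and x: "x \<in> X" and y: "y \<in> X" and xy: "x \<noteq> y"
    and lt: "red_deg red X m y < red_deg red X m x"
  shows "\<exists>red'. complement_distinct red' X m \<and>
     int (red_deg red' X m x) = int (red_deg red X m x) - 2 \<and>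
     int (red_deg red' X m y) = int (red_deg red X m y) + 2 \<and>
     (\<forall>z\<in>X. z \<noteq> x \<longrightarrow> z \<noteq> y \<longrightarrow> red_deg red' X m z = red_deg red X m z)"
proof -
  let ?S0 = "{A \<in> msubsets X m. red A \<and> x \<in> A \<and> y \<in> A}"
  let ?S1 = "{A \<in> msubsets X m. red A \<and> x \<in> A \<and> y \<notin> A}"
  let ?S2 = "{A \<in> msubsets X m. red A \<and> y \<in> A \<and> x \<notin> A}"
  have rx: "red_deg red X m x = card ?S0 + card ?S1"
    unfolding red_deg_def by (rule card_union2[OF finM]) auto
  have ry: "red_deg red X m y = card ?S0 + card ?S2"
    unfolding red_deg_def by (rule card_union2[OF finM]) auto
  have "\<exists>A\<in>?S1. \<not> red (insert y (A - {x}))"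
  proof (rule ccontr)
    assume "\<not> ?thesis"
    then have H: "\<And>A. A \<in> ?S1 \<Longrightarrow> red (insert y (A - {x}))" by blast
    have "card ?S1 \<le> card ?S2"
    proof (rule card_inj_on_le[where f = "\<lambda>A. insert y (A - {x})"])
      show "inj_on (\<lambda>A. insert y (A - {x})) ?S1"
        by (rule inj_on_inverseI[where g="\<lambda>B. insert x (B - {y})"]) (use xy in auto)
      show "(\<lambda>A. insert y (A - {x})) ` ?S1 \<subseteq> ?S2"
        using H swapM y xy by auto
      show "finite ?S2" using finM by simp
    qed
    then show False using rx ry lt by linarith
  qed
  then obtain A where A: "A \<in> msubsets X m" "red A" "x \<in> A" "y \<notin> A"
    and nB: "\<not> red (insert y (A - {x}))" by blast
  define B where "B = insert y (A - {x})"
  have BM: "B \<in> msubsets X m" unfolding B_def using swapM A y by blast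
  have AX: "A \<subseteq> X" using A by (auto simp: msubsets_def)
  have finA: "finite A" using AX fin finite_subset by blast
  have "card (A - {x}) = m - 1" using A finA by (simp add: msubsets_def)
  then have "A - {x} \<noteq> {}" using m2 by (intro notI) simp
  then obtain w where w: "w \<in> A" "w \<noteq> x" by blast
  have wB: "w \<in> B" using w unfolding B_def by auto
  have rB: "\<not> red B" using nB B_def by simp
  have rXA: "\<not> red (X - A)" using cd A by (auto simp: complement_distinct_def)
  have rXB: "red (X - B)" using cd BM rB by (auto simp: complement_distinct_def)
  have d1: "A \<noteq> B" using A xy unfolding B_def by auto
  have d2: "A \<noteq> X - A" using A by auto
  have d3: "A \<noteq> X - B" using w wB by auto
  have d4: "B \<noteq> X - A" using w wB by auto
  have d5: "B \<noteq> X - B" using y unfolding B_def by auto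
  have d6: "X - A \<noteq> X - B" using x A xy unfolding B_def by auto
  define F where "F = {A, B, X - A, X - B}"
  have FM: "F \<subseteq> msubsets X m" unfolding F_def using A BM compM by auto
  have cl: "\<And>C. C \<in> F \<Longrightarrow> X - C \<in> F" unfolding F_def using dd[OF A(1)] dd[OF BM] by auto
  define red' where "red' = (\<lambda>C. if C \<in> F then \<not> red C else red C)"
  have cd': "complement_distinct red' X m" unfolding red'_def by (rule flip_valid[OF cd FM cl])
  let ?h = "\<lambda>z C. if z \<in> C then (if red C then -1 else 1) else (0::int)"
  have sumF: "(\<Sum>C\<in>F. ?h z C) = ?h z A + ?h z B + ?h z (X - A) + ?h z (X - B)" for z
    unfolding F_def using d1 d2 d3 d4 d5 d6 by (simp add: add.assoc)
  have deg: "int (red_deg red' X m z) = int (red_deg red X m z) + (?h z A + ?h z B + ?h z (X - A) + ?h z (X - B))" for z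
    unfolding red'_def using flip_deg[OF FM, of red z] sumF[of z] by simp
  have "int (red_deg red' X m x) = int (red_deg red X m x) - 2"
    using deg[of x] A rB rXA rXB x unfolding B_def by auto
  moreover have "int (red_deg red' X m y) = int (red_deg red X m y) + 2"
    using deg[of y] A rB rXA rXB y unfolding B_def by auto
  moreover have "red_deg red' X m z = red_deg red X m z" if "z \<in> X" "z \<noteq> x" "z \<noteq> y" for z
  proof -
    have "?h z A + ?h z B + ?h z (X - A) + ?h z (X - B) = 0"
      using that A rB rXA rXB unfolding B_def by auto
    then show ?thesis using deg[of z] by simp
  qed
  ultimately show ?thesis using cd' by blast
qed

lemma reach_aux:
  fixes t :: "'a \<Rightarrow> int"
  assumes tb: "\<And>x y. x \<in> X \<Longrightarrow> y \<in> X \<Longrightarrow> t y \<le> t x + 2"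
    and ts: "(\<Sum>x\<in>X. t x) = int m * int ((2*m-1) choose (m-1))"
  shows "\<And>red. (\<Sum>x\<in>X. nat \<bar>int (red_deg red X m x) - t x\<bar>) = n \<Longrightarrow> complement_distinct red X m \<Longrightarrow>
     (\<forall>x\<in>X. even (int (red_deg red X m x) - t x)) \<Longrightarrow>
     \<exists>red'. complement_distinct red' X m \<and> (\<forall>x\<in>X. int (red_deg red' X m x) = t x)"
proof (induction n rule: less_induct)
  case (less n red)
  note cd = less.prems(2) and par = less.prems(3)
  let ?r = "\<lambda>x. int (red_deg red X m x)"
  show ?case
  proof (cases "\<forall>x\<in>X. ?r x = t x")
    case True then show ?thesis using cd by blast
  next
    case False
    then obtain x0 where x0: "x0 \<in> X" "?r x0 \<noteq> t x0" by blast
    have "(\<Sum>x\<in>X. red_deg red X m x) = m * ((2*m-1) choose (m-1))"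
      using sum_r N_val[OF cd] by simp
    then have sr: "(\<Sum>x\<in>X. ?r x) = (\<Sum>x\<in>X. t x)" using ts
      by (metis of_nat_mult of_nat_sum)
    have "\<exists>x\<in>X. ?r x > t x"
    proof (rule ccontr)
      assume "\<not> ?thesis" then have le: "\<forall>x\<in>X. ?r x \<le> t x" by auto
      then have "?r x0 < t x0" using x0 by force
      then have "(\<Sum>x\<in>X. ?r x) < (\<Sum>x\<in>X. t x)" using sum_strict_mono_ex1[OF fin le] x0 by blast
      then show False using sr by simp
    qed
    then obtain x where x: "x \<in> X" "?r x > t x" by blast
    have "\<exists>y\<in>X. ?r y < t y"
    proof (rule ccontr)
      assume "\<not> ?thesis" then have le: "\<forall>x\<in>X. t x \<le> ?r x" by auto
      then have "(\<Sum>x\<in>X. t x) < (\<Sum>x\<in>X. ?r x)" using sum_strict_mono_ex1[OF fin le] x by blast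
      then show False using sr by simp
    qed
    then obtain y where y: "y \<in> X" "?r y < t y" by blast
    have ex: "?r x - t x \<ge> 2" using ev2[of "?r x - t x"] par x by simp
    have ey: "t y - ?r y \<ge> 2" using ev2[of "t y - ?r y"] par y
      by (metis diff_gt_0_iff_gt even_minus minus_diff_eq)
    have txy: "t y \<le> t x + 2" using tb x(1) y(1) .
    have lt: "red_deg red X m y < red_deg red X m x" using ex ey txy by linarith
    have xy: "x \<noteq> y" using x y by auto
    obtain red' where cd': "complement_distinct red' X m"
      and rx': "int (red_deg red' X m x) = ?r x - 2"
      and ry': "int (red_deg red' X m y) = ?r y + 2"
      and rz': "\<forall>z\<in>X. z \<noteq> x \<longrightarrow> z \<noteq> y \<longrightarrow> red_deg red' X m z = red_deg red X m z"
      using move[OF cd x(1) y(1) xy lt] by blast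
    let ?r' = "\<lambda>x. int (red_deg red' X m x)"
    have par': "\<forall>z\<in>X. even (?r' z - t z)"
    proof
      fix z assume z: "z \<in> X"
      show "even (?r' z - t z)"
      proof (cases "z = x")
        case True
        have "?r' z - t z = (?r x - t x) - 2" using True rx' by simp
        then show ?thesis using par x by simp
      next
        case zx: False
        show ?thesis
        proof (cases "z = y")
          case True
          have "?r' z - t z = (?r y - t y) + 2" using True ry' by simp
          then show ?thesis using par y by simp
        next
          case False
          then show ?thesis using rz' z zx par by simp
        qed
      qed
    qed
    have pot: "(\<Sum>z\<in>X. nat \<bar>?r' z - t z\<bar>) < (\<Sum>z\<in>X. nat \<bar>?r z - t z\<bar>)"
    proof (rule sum_strict_mono_ex1[OF fin])
      show "\<forall>z\<in>X. nat \<bar>?r' z - t z\<bar> \<le> nat \<bar>?r z - t z\<bar>"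
      proof
        fix z assume z: "z \<in> X"
        show "nat \<bar>?r' z - t z\<bar> \<le> nat \<bar>?r z - t z\<bar>"
        proof (cases "z = x")
          case True then show ?thesis using rx' ex by simp
        next
          case zx: False
          show ?thesis
          proof (cases "z = y")
            case True then show ?thesis using ry' ey by simp
          next
            case False then show ?thesis using rz' z zx by simp
          qed
        qed
      qed
      show "\<exists>z\<in>X. nat \<bar>?r' z - t z\<bar> < nat \<bar>?r z - t z\<bar>"
        using x rx' ex by (intro bexI[of _ x]) auto
    qed
    show ?thesis
      by (rule less.IH[OF _ refl cd' par']) (use pot less.prems(1) in simp)
  qed
qed

lemma start:
  fixes t :: "'a \<Rightarrow> int"
  assumes tp: "\<And>x y. x \<in> X \<Longrightarrow> y \<in> X \<Longrightarrow> even (t x - t y)"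
  shows "\<exists>red. complement_distinct red X m \<and> (\<forall>x\<in>X. even (int (red_deg red X m x) - t x))"
proof -
  have "X \<noteq> {}" using cX m2 by auto
  then obtain x0 where x0: "x0 \<in> X" by blast
  define red0 where "red0 = (\<lambda>A. x0 \<in> A)"
  have cd0: "complement_distinct red0 X m"
    unfolding complement_distinct_def red0_def using x0 by auto
  have key: "\<exists>red. complement_distinct red X m \<and> even (int (red_deg red X m x0) - t x0)"
  proof (cases "even (int (red_deg red0 X m x0) - t x0)")
    case True with cd0 show ?thesis by blast
  next
    case False
    obtain A0 where A0: "A0 \<subseteq> X" "card A0 = m" using obtain_subset_with_card_n[of m X] cX by auto
    have A0M: "A0 \<in> msubsets X m" using A0 by (simp add: msubsets_def)
    have "A0 \<noteq> {}" using A0 m2 by auto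
    then have d: "A0 \<noteq> X - A0" by auto
    define F where "F = {A0, X - A0}"
    have FM: "F \<subseteq> msubsets X m" unfolding F_def using A0M compM by auto
    have cl: "\<And>C. C \<in> F \<Longrightarrow> X - C \<in> F" unfolding F_def using dd[OF A0M] by auto
    define red1 where "red1 = (\<lambda>C. if C \<in> F then \<not> red0 C else red0 C)"
    have cd1: "complement_distinct red1 X m" unfolding red1_def by (rule flip_valid[OF cd0 FM cl])
    let ?h = "\<lambda>C. if x0 \<in> C then (if red0 C then -1 else 1) else (0::int)"
    have "int (red_deg red1 X m x0) = int (red_deg red0 X m x0) + (?h A0 + ?h (X - A0))"
      unfolding red1_def using flip_deg[OF FM, of red0 x0] d unfolding F_def by simp
    moreover have "odd (?h A0 + ?h (X - A0))" using x0 by auto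
    ultimately have "even (int (red_deg red1 X m x0) - t x0)" using False by simp
    then show ?thesis using cd1 by blast
  qed
  then obtain red where cd: "complement_distinct red X m" and e0: "even (int (red_deg red X m x0) - t x0)" by blast
  have "even (int (red_deg red X m x) - t x)" if x: "x \<in> X" for x
  proof (cases "x = x0")
    case True then show ?thesis using e0 by simp
  next
    case False
    have a: "even (int (red_deg red X m x) - int (red_deg red X m x0))" using pair_even[OF cd x x0 False] .
    have b: "even (t x - t x0)" using tp x x0 .
    have "int (red_deg red X m x) - t x = (int (red_deg red X m x) - int (red_deg red X m x0)) + (int (red_deg red X m x0) - t x0) - (t x - t x0)"
      by simp
    then show ?thesis using a b e0 by simp
  qed
  then show ?thesis using cd by blast
qed

lemma reach:
  fixes t :: "'a \<Rightarrow> int"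
  assumes tb: "\<And>x y. x \<in> X \<Longrightarrow> y \<in> X \<Longrightarrow> t y \<le> t x + 2"
    and tp: "\<And>x y. x \<in> X \<Longrightarrow> y \<in> X \<Longrightarrow> even (t x - t y)"
    and ts: "(\<Sum>x\<in>X. t x) = int m * int ((2*m-1) choose (m-1))"
  shows "\<exists>red. complement_distinct red X m \<and> (\<forall>x\<in>X. int (red_deg red X m x) = t x)"
proof -
  obtain red where "complement_distinct red X m" "\<forall>x\<in>X. even (int (red_deg red X m x) - t x)"
    using start[of t, OF tp] by blast
  then show ?thesis using reach_aux[of t, OF tb ts refl] by blast
qed

lemma blue_int:
  assumes cd: "complement_distinct red X m" and x: "x \<in> X"
  shows "int (blue_deg red X m x) = int ((2*m-1) choose (m-1)) - int (red_deg red X m x)"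
  using NR_split[of red x] N_val[OF cd] blue_eq[OF cd x] by simp

end

theorem theorem1p5:
  fixes X :: "'a set" and m :: nat
  assumes "m \<ge> 2" and "finite X" and "card X = 2 * m"
  shows "(\<not> (\<exists>k. m = 2 ^ k) \<longrightarrow>
           (\<exists>red. complement_distinct red X m \<and>
              (\<forall>x \<in> X. red_deg red X m x = blue_deg red X m x)))
       \<and> ((\<exists>k. m = 2 ^ k) \<longrightarrow>
           (\<exists>red P. complement_distinct red X m \<and> P \<subseteq> X \<and> card P = m div 2 \<and>
              (\<forall>x \<in> P. int (red_deg red X m x) = int (blue_deg red X m x) + 3) \<and>
              (\<forall>x \<in> X - P. int (blue_deg red X m x) = int (red_deg red X m x) + 1)))"
proof -
  let ?N = "(2*m-1) choose (m-1)"
  have m1: "m \<ge> 1" using assms(1) by simp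
  note co = central_odd[OF m1]
  show ?thesis
  proof (intro conjI impI)
    assume np: "\<not> (\<exists>k. m = 2^k)"
    then have "even ?N" using co by simp
    then obtain q where q: "?N = 2*q" by blast
    define t where "t = (\<lambda>x::'a. int q)"
    have ts: "(\<Sum>x\<in>X. t x) = int m * int ?N" unfolding t_def using assms(3) q by simp
    obtain red where cd: "complement_distinct red X m" and r: "\<forall>x\<in>X. int (red_deg red X m x) = t x"
      using reach[OF assms(2,3,1), of t] ts unfolding t_def by auto
    have "\<forall>x\<in>X. red_deg red X m x = blue_deg red X m x"
    proof
      fix x assume x: "x \<in> X"
      have "int (blue_deg red X m x) = int ?N - int (red_deg red X m x)"
        by (rule blue_int[OF assms(2,3,1) cd x])
      then have "int (blue_deg red X m x) = int (red_deg red X m x)" using r x q unfolding t_def by simp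
      then show "red_deg red X m x = blue_deg red X m x" by simp
    qed
    then show "\<exists>red. complement_distinct red X m \<and> (\<forall>x \<in> X. red_deg red X m x = blue_deg red X m x)"
      using cd by blast
  next
    assume pw: "\<exists>k. m = 2^k"
    then have "odd ?N" using co by simp
    then obtain q where q: "?N = 2*q+1" using oddE by blast
    obtain k where k: "m = 2^k" using pw by blast
    have "k \<noteq> 0" using k assms(1) by (intro notI) simp
    then have "even m" using k by simp
    then obtain h where h: "m = 2*h" by blast
    obtain P where P: "P \<subseteq> X" "card P = h" using obtain_subset_with_card_n[of h X] assms(3) h by auto
    have finP: "finite P" using P(1) assms(2) finite_subset by blast
    have cXP: "card (X - P) = 3*h" using P assms(3) h finP by (simp add: card_Diff_subset)
    define t where "t = (\<lambda>x. if x \<in> P then int q + 2 else int q)"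
    have "(\<Sum>x\<in>X. t x) = (\<Sum>x\<in>X - P. t x) + (\<Sum>x\<in>P. t x)"
      by (rule sum.subset_diff[OF P(1) assms(2)])
    also have "(\<Sum>x\<in>X - P. t x) = (\<Sum>x\<in>X - P. int q)" by (rule sum.cong) (auto simp: t_def)
    also have "(\<Sum>x\<in>P. t x) = (\<Sum>x\<in>P. int q + 2)" by (rule sum.cong) (auto simp: t_def)
    finally have "(\<Sum>x\<in>X. t x) = int (3*h) * int q + int h * (int q + 2)" using cXP P(2) by simp
    then have ts: "(\<Sum>x\<in>X. t x) = int m * int ?N" using h q by (simp add: algebra_simps)
    have tb: "\<And>x y. x \<in> X \<Longrightarrow> y \<in> X \<Longrightarrow> t y \<le> t x + 2" by (auto simp: t_def)
    have tp: "\<And>x y. x \<in> X \<Longrightarrow> y \<in> X \<Longrightarrow> even (t x - t y)" by (auto simp: t_def)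
    obtain red where cd: "complement_distinct red X m" and r: "\<forall>x\<in>X. int (red_deg red X m x) = t x"
      using reach[OF assms(2,3,1), of t, OF tb tp ts] by blast
    have bi: "\<And>x. x \<in> X \<Longrightarrow> int (blue_deg red X m x) = int ?N - int (red_deg red X m x)"
      using blue_int[OF assms(2,3,1) cd] by blast
    have "\<forall>x \<in> P. int (red_deg red X m x) = int (blue_deg red X m x) + 3"
    proof
      fix x assume x: "x \<in> P"
      then have "x \<in> X" using P(1) by blast
      then show "int (red_deg red X m x) = int (blue_deg red X m x) + 3"
        using bi[of x] r x q unfolding t_def by simp
    qed
    moreover have "\<forall>x \<in> X - P. int (blue_deg red X m x) = int (red_deg red X m x) + 1"
    proof
      fix x assume x: "x \<in> X - P"
      then show "int (blue_deg red X m x) = int (red_deg red X m x) + 1"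
        using bi[of x] r x q unfolding t_def by simp
    qed
    moreover have "card P = m div 2" using P(2) h by simp
    ultimately show "\<exists>red P. complement_distinct red X m \<and> P \<subseteq> X \<and> card P = m div 2 \<and>
              (\<forall>x \<in> P. int (red_deg red X m x) = int (blue_deg red X m x) + 3) \<and>
              (\<forall>x \<in> X - P. int (blue_deg red X m x) = int (red_deg red X m x) + 1)"
      using cd P(1) by blast
  qed
qed

end
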